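(* Let $N$ be a positive integer, $h:=1/N$, $t_j:=jh$, and $e_n(t):=\exp(2\pi i n t)$. Then for every integer $n$ with $|n|\le N-1$ and every $t\in\mathbb R$ with $t/h\notin\mathbb Z$, \[ h\sum_{j=1}^{N}\cot(\pi(t-t_j))\,e_n(t_j)=\mathrm{p.v.}\int_0^1\cot(\pi(t-\tau))\,e_n(\tau)\,\mathrm d\tau+\cot(\pi t/h)\,e_n(t). \]
   Context: p.v. denotes the Cauchy principal value integral. *)

theory Defs
  imports "HOL-Analysis.Analysis"
begin

definition en :: "int \<Rightarrow> real \<Rightarrow> complex" where
  "en n t = exp (2 * of_real pi * \<i> * of_int n * of_real t)"

text \<open>Truncated integral for the Cauchy principal value of
  int_0^1 cot(pi(t - tau)) f(tau) dtau: the eps-neighbourhoods of all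
  singular points tau (those with t - tau an integer) are removed from [0,1].\<close>
definition pv_cot_trunc :: "real \<Rightarrow> (real \<Rightarrow> complex) \<Rightarrow> real \<Rightarrow> complex" where
  "pv_cot_trunc t f \<epsilon> =
     integral {\<tau> \<in> {0..1}. \<forall>k::int. \<epsilon> \<le> \<bar>t - \<tau> - of_int k\<bar>}
       (\<lambda>\<tau>. of_real (cot (pi * (t - \<tau>))) * f \<tau>)"

definition has_pv_cot_integral :: "real \<Rightarrow> (real \<Rightarrow> complex) \<Rightarrow> complex \<Rightarrow> bool" where
  "has_pv_cot_integral t f I \<longleftrightarrow> (pv_cot_trunc t f \<longlongrightarrow> I) (at_right 0)"

end

theory Submission
  imports Defs
begin

lemma en_add: "en (a + b) x = en a x * en b x"
  unfolding en_def by (simp add: exp_add[symmetric] algebra_simps)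

lemma en_0 [simp]: "en 0 x = 1"
  unfolding en_def by simp

lemma en_at0 [simp]: "en k 0 = 1"
  unfolding en_def by simp

lemma en_nat_pow: "en (int k) x = (en 1 x) ^ k"
  unfolding en_def by (simp add: exp_of_nat_mult[symmetric] algebra_simps)

lemma en_int_shift: "en k (x + of_int m) = en k x"
proof -
  have "en k (x + of_int m) = en k x * exp (of_int (k*m) * (2 * of_real pi * \<i>))"
    unfolding en_def by (simp add: exp_add[symmetric] algebra_simps)
  also have "exp (of_int (k*m) * (2 * of_real pi * \<i>)) = 1"
    by (subst exp_eq_1) (auto intro!: exI[of _ "k*m"])
  finally show ?thesis by simp
qed

lemma en_deriv: "(en k has_vector_derivative (2 * of_real pi * \<i> * of_int k * en k x)) (at x within S)"
proof -
  have "((\<lambda>z. exp (2 * of_real pi * \<i> * of_int k * z)) has_field_derivative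
         (2 * of_real pi * \<i> * of_int k * exp (2 * of_real pi * \<i> * of_int k * of_real x))) (at (of_real x))"
    by (auto intro!: derivative_eq_intros)
  from has_vector_derivative_real_field[OF this] show ?thesis unfolding en_def by simp
qed

lemma cont_en: "continuous_on S (en k)"
  unfolding en_def by (intro continuous_intros)

lemma en_mult_arg: "en k (of_nat j * y) = (en k y) ^ j"
  unfolding en_def by (simp add: exp_of_nat_mult[symmetric] algebra_simps)

definition Qp :: "nat \<Rightarrow> (real \<Rightarrow> complex) \<Rightarrow> bool" where
  "Qp N f \<longleftrightarrow> (f has_integral (of_real (1 / real N) * (\<Sum>j=1..N. f (real j / real N)))) {0..1}
     \<and> continuous_on UNIV f"

lemma en_sum_roots:
  assumes N: "N > 0" and k: "k \<noteq> 0" "\<bar>k\<bar> < int N"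
  shows "(\<Sum>j=1..N. en k (real j / real N)) = 0"
proof -
  define w where "w = en k (1 / real N)"
  have pw: "en k (real j / real N) = w ^ j" for j
    using en_mult_arg[of k j "1 / real N"] by (simp add: w_def)
  have wN: "w ^ N = 1"
    using en_mult_arg[of k N "1 / real N"] N en_int_shift[of k 0 1] by (simp add: w_def)
  have w1: "w \<noteq> 1"
  proof
    assume "w = 1"
    then obtain m :: int where m: "2 * pi * real_of_int k / real N = of_int (2 * m) * pi"
      unfolding w_def en_def by (subst (asm) exp_eq_1) auto
    then have "real_of_int k = real_of_int m * real N" using N by (simp add: field_simps)
    then have "k = m * int N" by (metis of_int_eq_iff of_int_mult of_int_of_nat_eq)
    with k show False
      by (cases "m = 0") (auto simp: abs_mult dest: mult_le_cancel_right1[THEN iffD1])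
  qed
  have "(1 - w) * (\<Sum>j=1..N. w ^ j) = w ^ 1 - w ^ Suc N"
    using N by (intro sum_gp_multiplied) simp
  also have "\<dots> = 0" using wN by simp
  finally show ?thesis using w1 pw by simp
qed

lemma Q_en:
  assumes N: "N > 0" and k: "\<bar>k\<bar> < int N"
  shows "Qp N (en k)"
proof (cases "k = 0")
  case True
  have e: "en 0 = (\<lambda>_. 1)" by (rule ext) simp
  have i: "((\<lambda>_. 1::complex) has_integral 1) {0..1::real}"
    using has_integral_const_real[of "1::complex" 0 1] by simp
  have s: "of_real (1 / real N) * (\<Sum>j=1..N. (1::complex)) = 1" using N by simp
  show ?thesis unfolding Qp_def True e s using i by (simp add: continuous_on_const)
next
  case False
  define c where "c = 2 * of_real pi * \<i> * of_int k"
  have c0: "c \<noteq> 0" using False by (simp add: c_def)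
  have "((\<lambda>x. c * en k x) has_integral (en k 1 - en k 0)) {0..1}"
    by (rule fundamental_theorem_of_calculus) (auto simp: c_def intro!: en_deriv)
  moreover have "en k 1 = 1" using en_int_shift[of k 0 1] by simp
  ultimately have "((\<lambda>x. c * en k x) has_integral 0) {0..1}" by simp
  from has_integral_mult_right[OF this, of "1/c"]
  have "((\<lambda>x. (1/c) * (c * en k x)) has_integral 0) {0..1}"
    by simp
  then have "(en k has_integral 0) {0..1}" using c0 by simp
  then show ?thesis unfolding Qp_def using en_sum_roots[OF N False k] by (simp add: cont_en)
qed

lemma Q_add: "Qp N f \<Longrightarrow> Qp N g \<Longrightarrow> Qp N (\<lambda>x. f x + g x)"
  unfolding Qp_def by (auto simp: sum.distrib distrib_left intro!: has_integral_add continuous_intros)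

lemma Q_cmult: assumes "Qp N f" shows "Qp N (\<lambda>x. c * f x)"
proof -
  let ?I = "of_real (1 / real N) * (\<Sum>j=1..N. f (real j / real N))"
  have h1: "(f has_integral ?I) {0..1}" and h2: "continuous_on UNIV f" using assms unfolding Qp_def by auto
  have a: "((\<lambda>x. c * f x) has_integral c * ?I) {0..1}" by (rule has_integral_mult_right[OF h1])
  have b: "continuous_on UNIV (\<lambda>x. c * f x)" using h2 by (intro continuous_on_mult_left)
  have e: "c * ?I = of_real (1 / real N) * (\<Sum>j=1..N. c * f (real j / real N))"
    by (simp add: sum_distrib_left mult_ac)
  show ?thesis unfolding Qp_def using a b unfolding e by blast
qed

lemma Q_sum: "finite A \<Longrightarrow> (\<And>i. i \<in> A \<Longrightarrow> Qp N (f i)) \<Longrightarrow> Qp N (\<lambda>x. \<Sum>i\<in>A. f i x)"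
proof (induction A rule: finite_induct)
  case empty
  then show ?case unfolding Qp_def by simp
next
  case (insert a A)
  then show ?case by (simp add: Q_add)
qed

definition Pn :: "int \<Rightarrow> real \<Rightarrow> real \<Rightarrow> complex" where
  "Pn n t x = (if n \<ge> 0 then (\<Sum>k<nat n. en (n - 1 - int k) t * en (int k) x)
       else - (\<Sum>k<nat (-n). en (-1 - int k) t * en (int k + n) x))"

definition Tn :: "int \<Rightarrow> real \<Rightarrow> real \<Rightarrow> complex" where
  "Tn n t x = - \<i> * (en 1 t + en 1 x) * Pn n t x"

lemma en_factor: "en n x - en n t = (en 1 x - en 1 t) * Pn n t x"
proof (cases "n \<ge> 0")
  case True
  then obtain m where m: "n = int m" by (metis nonneg_int_cases)
  have "en n x - en n t = (en 1 x)^m - (en 1 t)^m" using m en_nat_pow by simp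
  also have "\<dots> = (en 1 x - en 1 t) * (\<Sum>i<m. (en 1 t) ^ (m - Suc i) * (en 1 x) ^ i)"
    by (rule power_diff_sumr2)
  also have "(\<Sum>i<m. (en 1 t) ^ (m - Suc i) * (en 1 x) ^ i) = (\<Sum>k<m. en (n - 1 - int k) t * en (int k) x)"
  proof (rule sum.cong)
    fix i assume "i \<in> {..<m}"
    then have "n - 1 - int i = int (m - Suc i)" using m by auto
    then show "(en 1 t) ^ (m - Suc i) * (en 1 x) ^ i = en (n - 1 - int i) t * en (int i) x"
      by (simp add: en_nat_pow)
  qed simp
  finally show ?thesis using True m by (simp add: Pn_def)
next
  case False
  define p where "p = nat (-n)"
  have np: "n = - int p" using False p_def by simp
  define a where "a k = en (- int k) t * en (int k + n) x" for k
  have step: "(en 1 x - en 1 t) * (en (-1 - int k) t * en (int k + n) x) = a (Suc k) - a k" for k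
  proof -
    have e1: "en 1 x * en (int k + n) x = en (int (Suc k) + n) x" by (simp add: en_add[symmetric] algebra_simps)
    have e2: "en 1 t * en (-1 - int k) t = en (- int k) t" by (simp add: en_add[symmetric] algebra_simps)
    have e3: "en (-1 - int k) t = en (- int (Suc k)) t" by (simp add: algebra_simps)
    have "(en 1 x - en 1 t) * (en (-1 - int k) t * en (int k + n) x)
       = en (-1 - int k) t * (en 1 x * en (int k + n) x) - (en 1 t * en (-1 - int k) t) * en (int k + n) x"
      by (simp add: algebra_simps)
    also have "\<dots> = a (Suc k) - a k" unfolding e1 e2 a_def using e3 by simp
    finally show ?thesis .
  qed
  have "(en 1 x - en 1 t) * (\<Sum>k<p. en (-1 - int k) t * en (int k + n) x) = (\<Sum>k<p. a (Suc k) - a k)"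
    by (simp add: sum_distrib_left step)
  also have "\<dots> = a p - a 0" by (rule sum_lessThan_telescope)
  also have "\<dots> = en n t - en n x" unfolding a_def using np by simp
  finally show ?thesis using False by (simp add: Pn_def p_def[symmetric] algebra_simps)
qed

lemma cis_expand: "cis th = of_real (cos th) + \<i> * of_real (sin th)"
  by (simp add: complex_eq_iff)

lemma cot_exp:
  assumes "sin (pi * (t - x)) \<noteq> 0"
  shows "of_real (cot (pi * (t - x))) * (en 1 x - en 1 t) = - \<i> * (en 1 t + en 1 x)"
proof -
  define th where "th = pi * (t - x)"
  define u where "u = exp (\<i> * of_real (pi * (t + x)))"
  have et: "en 1 t = u * cis th"
  proof -
    have "2 * of_real pi * \<i> * of_int 1 * of_real t = \<i> * of_real (pi * (t + x)) + \<i> * of_real (pi * (t - x))"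
      by (simp add: algebra_simps)
    then show ?thesis unfolding en_def u_def th_def cis_conv_exp by (simp only: exp_add)
  qed
  have ex: "en 1 x = u * cis (- th)"
  proof -
    have "2 * of_real pi * \<i> * of_int 1 * of_real x = \<i> * of_real (pi * (t + x)) + \<i> * of_real (- (pi * (t - x)))"
      by (simp add: algebra_simps)
    then show ?thesis unfolding en_def u_def th_def cis_conv_exp by (simp only: exp_add)
  qed
  have s: "sin th \<noteq> 0" using assms th_def by simp
  have c: "of_real (cot th) * of_real (sin th) = (of_real (cos th) :: complex)"
  proof -
    have "cot th * sin th = cos th" using s by (simp add: cot_def)
    then show ?thesis by (metis of_real_mult)
  qed
  have "of_real (cot th) * (en 1 x - en 1 t) = u * (-2 * \<i>) * (of_real (cot th) * of_real (sin th))"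
    unfolding et ex cis_expand by (simp add: algebra_simps)
  also have "\<dots> = - \<i> * (en 1 t + en 1 x)"
    unfolding c et ex cis_expand by (simp add: algebra_simps)
  finally show ?thesis using th_def by simp
qed

lemma G_decomp:
  assumes "sin (pi * (t - x)) \<noteq> 0"
  shows "of_real (cot (pi * (t - x))) * en n x = Tn n t x + en n t * of_real (cot (pi * (t - x)))"
proof -
  have h: "of_real (cot (pi * (t - x))) * (en n x - en n t) = Tn n t x"
    unfolding en_factor[of n x t] mult.assoc[symmetric] cot_exp[OF assms] Tn_def ..
  have "of_real (cot (pi * (t - x))) * en n x = of_real (cot (pi * (t - x))) * (en n x - en n t) + en n t * of_real (cot (pi * (t - x)))"
    by (simp add: right_diff_distrib)
  then show ?thesis unfolding h .
qed

lemma Q_T_gen: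
  assumes N: "N > 0" and A: "finite A" and g: "\<And>k. k \<in> A \<Longrightarrow> \<bar>g k\<bar> < int N \<and> \<bar>g k + 1\<bar> < int N"
    and P: "\<And>x. Pn n t x = (\<Sum>k\<in>A. c k * en (g k) x)"
  shows "Qp N (Tn n t)"
proof -
  have "Tn n t = (\<lambda>x. \<Sum>k\<in>A. (- \<i> * c k * en 1 t) * en (g k) x + (- \<i> * c k) * en (g k + 1) x)"
  proof
    fix x
    have "Tn n t x = (\<Sum>k\<in>A. - \<i> * (en 1 t + en 1 x) * (c k * en (g k) x))"
      unfolding Tn_def P by (rule sum_distrib_left)
    also have "\<dots> = (\<Sum>k\<in>A. (- \<i> * c k * en 1 t) * en (g k) x + (- \<i> * c k) * en (g k + 1) x)"
    proof (rule sum.cong)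
      fix k
      have "en (g k + 1) x = en 1 x * en (g k) x" by (simp add: en_add)
      then show "- \<i> * (en 1 t + en 1 x) * (c k * en (g k) x) = (- \<i> * c k * en 1 t) * en (g k) x + (- \<i> * c k) * en (g k + 1) x"
        by (simp add: algebra_simps)
    qed simp
    finally show "Tn n t x = (\<Sum>k\<in>A. (- \<i> * c k * en 1 t) * en (g k) x + (- \<i> * c k) * en (g k + 1) x)" .
  qed
  moreover have "Qp N (\<lambda>x. \<Sum>k\<in>A. (- \<i> * c k * en 1 t) * en (g k) x + (- \<i> * c k) * en (g k + 1) x)"
    using A g N by (intro Q_sum Q_add Q_cmult Q_en) auto
  ultimately show ?thesis by simp
qed

lemma Q_T:
  assumes N: "N > 0" and n: "\<bar>n\<bar> \<le> int N - 1"
  shows "Qp N (Tn n t)"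
proof (cases "n \<ge> 0")
  case True
  show ?thesis
  proof (rule Q_T_gen[OF N, of "{..<nat n}" "\<lambda>k. int k" n t "\<lambda>k. en (n - 1 - int k) t"])
    show "Pn n t x = (\<Sum>k<nat n. en (n - 1 - int k) t * en (int k) x)" for x
      using True by (simp add: Pn_def)
  qed (use n True in auto)
next
  case False
  show ?thesis
  proof (rule Q_T_gen[OF N, of "{..<nat (-n)}" "\<lambda>k. int k + n" n t "\<lambda>k. - en (-1 - int k) t"])
    show "Pn n t x = (\<Sum>k<nat (-n). - en (-1 - int k) t * en (int k + n) x)" for x
      using False by (simp add: Pn_def sum_negf)
  qed (use n False in auto)
qed

lemma sin_nz:
  assumes N: "N > 0" and tN: "t * real N \<notin> \<int>"
  shows "sin (pi * (t - real j / real N)) \<noteq> 0"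
proof
  assume "sin (pi * (t - real j / real N)) = 0"
  then have "(t - real j / real N) \<in> \<int>" using sin_times_pi_eq_0[of "t - real j / real N"]
    by (simp add: mult.commute)
  then have "(t - real j / real N) * real N + real j \<in> \<int>" by (intro Ints_add Ints_mult) auto
  moreover have "(t - real j / real N) * real N + real j = t * real N" using N by (simp add: field_simps)
  ultimately show False using tN by simp
qed

lemma roots_pow_sum:
  assumes N: "N > 0" and m: "m < N"
  shows "(\<Sum>j=1..N. (en 1 (real j / real N)) ^ m) = (if m = 0 then of_nat N else 0)"
proof (cases "m = 0")
  case True then show ?thesis by simp
next
  case False
  have "(\<Sum>j=1..N. (en 1 (real j / real N)) ^ m) = (\<Sum>j=1..N. en (int m) (real j / real N))"
    by (simp add: en_nat_pow)
  also have "\<dots> = 0" using en_sum_roots[OF N, of "int m"] False m by simp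
  finally show ?thesis using False by simp
qed

lemma root_N: "N > 0 \<Longrightarrow> (en 1 (real j / real N)) ^ N = 1"
  using en_mult_arg[of 1 N "real j / real N"] en_int_shift[of 1 0 "int j"] by simp

lemma inv_sum:
  fixes z :: complex
  assumes N: "N > 0" and zN: "z ^ N \<noteq> 1"
  shows "(\<Sum>j=1..N. 1 / (z - en 1 (real j / real N))) = of_nat N * z ^ (N - 1) / (z ^ N - 1)"
proof -
  let ?W = "\<lambda>j. en 1 (real j / real N)"
  have d: "z ^ N - 1 \<noteq> 0" using zN by simp
  have each: "1 / (z - ?W j) = (\<Sum>i<N. (?W j) ^ (N - Suc i) * z ^ i) / (z ^ N - 1)" for j
  proof -
    have "z ^ N - 1 = z ^ N - (?W j) ^ N" using root_N[OF N] by simp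
    also have "\<dots> = (z - ?W j) * (\<Sum>i<N. (?W j) ^ (N - Suc i) * z ^ i)" by (rule power_diff_sumr2)
    finally have e: "z ^ N - 1 = (z - ?W j) * (\<Sum>i<N. (?W j) ^ (N - Suc i) * z ^ i)" .
    then have "z - ?W j \<noteq> 0" using d by auto
    with e d show ?thesis by (simp add: field_simps)
  qed
  have "(\<Sum>j=1..N. 1 / (z - ?W j)) = (\<Sum>j=1..N. \<Sum>i<N. (?W j) ^ (N - Suc i) * z ^ i) / (z ^ N - 1)"
    by (simp add: each sum_divide_distrib)
  also have "(\<Sum>j=1..N. \<Sum>i<N. (?W j) ^ (N - Suc i) * z ^ i) = (\<Sum>i<N. (\<Sum>j=1..N. (?W j) ^ (N - Suc i)) * z ^ i)"
    by (subst sum.swap) (simp add: sum_distrib_right)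
  also have "\<dots> = (\<Sum>i<N. (if i = N - 1 then of_nat N * z ^ (N - 1) else 0))"
  proof (rule sum.cong)
    fix i assume "i \<in> {..<N}"
    then have i: "i < N" by simp
    have "N - Suc i < N" using N by simp
    then show "(\<Sum>j=1..N. (?W j) ^ (N - Suc i)) * z ^ i = (if i = N - 1 then of_nat N * z ^ (N - 1) else 0)"
      using roots_pow_sum[OF N, of "N - Suc i"] i by auto
  qed simp
  also have "\<dots> = of_nat N * z ^ (N - 1)" using N by (simp add: sum.delta')
  finally show ?thesis .
qed

lemma cot_as_frac:
  assumes s: "sin (pi * (t - x)) \<noteq> 0" and ne: "en 1 x \<noteq> en 1 t"
  shows "of_real (cot (pi * (t - x))) = - \<i> + 2 * \<i> * en 1 t / (en 1 t - en 1 x)"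
proof -
  have d: "en 1 x - en 1 t \<noteq> 0" using ne by simp
  have "of_real (cot (pi * (t - x))) = - \<i> * (en 1 t + en 1 x) / (en 1 x - en 1 t)"
    using cot_exp[OF s] d by (simp add: field_simps)
  also have "\<dots> = - \<i> + 2 * \<i> * en 1 t / (en 1 t - en 1 x)"
    using d by (simp add: field_simps)
  finally show ?thesis .
qed

lemma cot_sum:
  assumes N: "N > 0" and tN: "t * real N \<notin> \<int>"
  shows "(\<Sum>j=1..N. of_real (cot (pi * (t - real j / real N))) :: complex)
         = of_nat N * of_real (cot (pi * t * real N))"
proof -
  define z where "z = en 1 t"
  let ?W = "\<lambda>j. en 1 (real j / real N)"
  have zN: "z ^ N = en 1 (t * real N)" unfolding z_def en_def
    by (simp add: exp_of_nat_mult[symmetric] algebra_simps)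
  have zN1: "z ^ N \<noteq> 1"
  proof
    assume "z ^ N = 1"
    then obtain m :: int where "2 * pi * (t * real N) = of_int (2 * m) * pi"
      unfolding zN en_def by (subst (asm) exp_eq_1) auto
    then have "t * real N = of_int m" by (simp add: field_simps)
    with tN show False by auto
  qed
  have Wz: "?W j \<noteq> z" for j
  proof
    assume "?W j = z"
    then have "z ^ N = 1" using root_N[OF N, of j] by simp
    with zN1 show False by simp
  qed
  have "(\<Sum>j=1..N. of_real (cot (pi * (t - real j / real N))) :: complex)
        = (\<Sum>j=1..N. - \<i> + 2 * \<i> * z * (1 / (z - ?W j)))"
    by (rule sum.cong) (auto simp: z_def cot_as_frac[OF sin_nz[OF N tN]] Wz[unfolded z_def])
  also have "\<dots> = - \<i> * of_nat N + 2 * \<i> * z * (\<Sum>j=1..N. 1 / (z - ?W j))"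
    by (simp add: sum.distrib sum_distrib_left sum_subtractf)
  also have "\<dots> = - \<i> * of_nat N + 2 * \<i> * of_nat N * (z * z ^ (N - 1)) / (z ^ N - 1)"
    unfolding inv_sum[OF N zN1] by (simp add: algebra_simps)
  also have "z * z ^ (N - 1) = z ^ N" using N by (simp add: power_eq_if[of z N])
  also have "- \<i> * of_nat N + 2 * \<i> * of_nat N * z ^ N / (z ^ N - 1)
      = of_nat N * (- \<i> + 2 * \<i> * en 1 (t * real N) / (en 1 (t * real N) - en 1 0))"
    unfolding zN by (simp add: algebra_simps)
  also have "- \<i> + 2 * \<i> * en 1 (t * real N) / (en 1 (t * real N) - en 1 0) = of_real (cot (pi * (t * real N - 0)))"
  proof (rule cot_as_frac[symmetric])
    show "sin (pi * (t * real N - 0)) \<noteq> 0" using tN sin_times_pi_eq_0[of "t * real N"] by (simp add: mult.commute)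
    show "en 1 0 \<noteq> en 1 (t * real N)" using zN1 zN by simp
  qed
  finally show ?thesis by (simp add: mult.assoc)
qed

definition Phi :: "real \<Rightarrow> real \<Rightarrow> real" where
  "Phi t x = - (1 / (2 * pi)) * ln ((sin (pi * (t - x)))\<^sup>2)"

lemma Phi_deriv:
  assumes sn: "sin (pi * (t - x)) \<noteq> 0"
  shows "(Phi t has_real_derivative cot (pi * (t - x))) (at x within S)"
proof -
  let ?s = "sin (pi * (t - x))" and ?c = "cos (pi * (t - x))"
  have p: "?s\<^sup>2 > 0" using sn by simp
  have d1: "((\<lambda>x. pi * (t - x)) has_real_derivative (- pi)) (at x within S)"
    by (auto intro!: derivative_eq_intros)
  have d2: "((\<lambda>x. sin (pi * (t - x))) has_real_derivative (?c * (- pi))) (at x within S)"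
    using DERIV_sin d1 by (rule DERIV_chain2)
  have d3: "((\<lambda>x. (sin (pi * (t - x)))\<^sup>2) has_real_derivative (2 * ?s * (?c * (- pi)))) (at x within S)"
    using DERIV_power[OF d2, of 2] by (simp add: power2_eq_square mult_ac)
  have d4: "((\<lambda>x. ln ((sin (pi * (t - x)))\<^sup>2)) has_real_derivative (1 / ?s\<^sup>2 * (2 * ?s * (?c * (- pi))))) (at x within S)"
    using DERIV_ln_divide[OF p] d3 by (metis DERIV_chain2 DERIV_ln_divide p)
  have d5: "(Phi t has_real_derivative (- (1 / (2 * pi)) * (1 / ?s\<^sup>2 * (2 * ?s * (?c * (- pi)))))) (at x within S)"
    unfolding Phi_def by (rule DERIV_cmult[OF d4])
  have e: "- (1 / (2 * pi)) * (1 / ?s\<^sup>2 * (2 * ?s * (?c * (- pi)))) = cot (pi * (t - x))"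
    using sn by (simp add: cot_def power2_eq_square field_simps)
  show ?thesis using d5 unfolding e .
qed

lemma cot_int:
  assumes uv: "u \<le> v" and nz: "\<And>x. x \<in> {u..v} \<Longrightarrow> sin (pi * (t - x)) \<noteq> 0"
  shows "((\<lambda>x. of_real (cot (pi * (t - x))) :: complex) has_integral of_real (Phi t v - Phi t u)) {u..v}"
proof -
  have "((\<lambda>x. of_real (Phi t x) :: complex) has_vector_derivative of_real (cot (pi * (t - x)))) (at x within {u..v})"
    if "x \<in> {u..v}" for x
    by (rule has_vector_derivative_of_real) (rule Phi_deriv[OF nz[OF that]])
  from fundamental_theorem_of_calculus[OF uv this] show ?thesis by simp
qed

lemma not_int_small: "0 < \<bar>x\<bar> \<Longrightarrow> \<bar>x\<bar> < 1 \<Longrightarrow> (x::real) \<notin> \<int>"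
  by (auto elim!: Ints_cases)

lemma dist_int:
  fixes x e :: real
  assumes "e \<le> \<bar>x\<bar>" "\<bar>x\<bar> \<le> 1 - e" "0 < e"
  shows "e \<le> \<bar>x + of_int m\<bar>"
proof -
  consider "m = 0" | "m \<ge> 1" | "m \<le> -1" by linarith
  then show ?thesis
  proof cases
    case 2 then have "real_of_int m \<ge> 1" by simp
    then show ?thesis using assms by (cases "x \<ge> 0") auto
  next
    case 3 then have "real_of_int m \<le> -1" by simp
    then show ?thesis using assms by (cases "x \<ge> 0") auto
  qed (use assms in auto)
qed

lemma sin_sq_shift: "(sin (pi * of_int K + y))\<^sup>2 = (sin y)\<^sup>2"
proof -
  have "sin (pi * of_int K + y) = cos (pi * of_int K) * sin y"
    by (simp add: sin_add)
  moreover have "(cos (pi * of_int K))\<^sup>2 = 1"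
    using sin_cos_squared_add[of "pi * of_int K"] by simp
  ultimately show ?thesis by (simp add: power_mult_distrib)
qed

lemma sin_nz_near:
  assumes "\<bar>(t - x) - of_int K\<bar> < 1" "0 < \<bar>(t - x) - of_int K\<bar>"
  shows "sin (pi * (t - x)) \<noteq> 0"
proof
  assume "sin (pi * (t - x)) = 0"
  then have "t - x \<in> \<int>" using sin_times_pi_eq_0[of "t - x"] by (simp add: mult.commute)
  then have "(t - x) - of_int K \<in> \<int>" using Ints_diff Ints_of_int by blast
  with not_int_small[OF assms(2,1)] show False by simp
qed

theorem lemmaB2:
  fixes N :: nat and n :: int and t :: real
  assumes "N > 0"
    and "\<bar>n\<bar> \<le> int N - 1"
    and "t * real N \<notin> \<int>"
  shows "has_pv_cot_integral t (en n)
           ((1 / real N) * (\<Sum>j=1..N. of_real (cot (pi * (t - real j / real N))) * en n (real j / real N))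
            - of_real (cot (pi * t * real N)) * en n t)"
proof -
  note N = assms(1) and nb = assms(2) and tN = assms(3)
  define K where "K = floor t"
  define a where "a = t - of_int K"
  have tK: "t = of_int K + a" by (simp add: a_def)
  have tnot: "t \<notin> \<int>"
  proof
    assume "t \<in> \<int>" then have "t * real N \<in> \<int>" by (intro Ints_mult) auto
    with tN show False by simp
  qed
  have a0: "0 < a"
  proof -
    have "a \<ge> 0" unfolding a_def K_def by simp
    moreover have "a \<noteq> 0" using tnot unfolding a_def by auto
    ultimately show ?thesis by simp
  qed
  have a1: "a < 1" unfolding a_def K_def by linarith
  define d where "d = min a (1 - a)"
  have d0: "d > 0" using a0 a1 by (simp add: d_def)
  define T where "T = Tn n t"
  define I where "I = of_real (1 / real N) * (\<Sum>j=1..N. T (real j / real N))"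
  have QT: "Qp N T" unfolding T_def by (rule Q_T[OF N nb])
  then have hT: "(T has_integral I) {0..1}" and cT: "continuous_on UNIV T" unfolding Qp_def I_def by auto
  have intT: "T integrable_on {u..v}" for u v
    by (rule integrable_continuous_interval) (rule continuous_on_subset[OF cT], simp)
  define G where "G = (\<lambda>x. of_real (cot (pi * (t - x))) * en n x)"

  have trunc: "pv_cot_trunc t (en n) e = integral {0..a-e} T + integral {a+e..1} T"
    if e: "0 < e" "e < d" for e
  proof -
    have ea: "e < a" "e < 1 - a" using e by (auto simp: d_def)
    have Seq: "{x \<in> {0..1}. \<forall>k::int. e \<le> \<bar>t - x - of_int k\<bar>} = {0..a-e} \<union> {a+e..1}"
    proof (rule set_eqI, rule iffI)
      fix x assume "x \<in> {x \<in> {0..1}. \<forall>k::int. e \<le> \<bar>t - x - of_int k\<bar>}"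
      then have x: "0 \<le> x" "x \<le> 1" "e \<le> \<bar>t - x - of_int K\<bar>" by auto
      then have "e \<le> \<bar>a - x\<bar>" using tK by simp
      then show "x \<in> {0..a-e} \<union> {a+e..1}" using x by auto
    next
      fix x assume x: "x \<in> {0..a-e} \<union> {a+e..1}"
      have "e \<le> \<bar>t - x - of_int k\<bar>" for k
      proof -
        have eq: "t - x - of_int k = (a - x) + of_int (K - k)" using tK by simp
        show ?thesis unfolding eq by (rule dist_int) (use x ea e in auto)
      qed
      then show "x \<in> {x \<in> {0..1}. \<forall>k::int. e \<le> \<bar>t - x - of_int k\<bar>}"
        using x ea e by auto
    qed
    have nz1: "sin (pi * (t - x)) \<noteq> 0" if "x \<in> {0..a-e}" for x
      by (rule sin_nz_near[of t x K]) (use that tK ea e in auto)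
    have nz2: "sin (pi * (t - x)) \<noteq> 0" if "x \<in> {a+e..1}" for x
      by (rule sin_nz_near[of t x K]) (use that tK ea e a1 in auto)
    have GT: "G x = T x + en n t * of_real (cot (pi * (t - x)))" if "sin (pi * (t - x)) \<noteq> 0" for x
      unfolding G_def T_def by (rule G_decomp[OF that])
    define C1 where "C1 = Phi t (a - e) - Phi t 0"
    define C2 where "C2 = Phi t 1 - Phi t (a + e)"
    have h1: "(G has_integral (integral {0..a-e} T + en n t * of_real C1)) {0..a-e}"
    proof -
      have "((\<lambda>x. T x + en n t * of_real (cot (pi * (t - x)))) has_integral
             (integral {0..a-e} T + en n t * of_real C1)) {0..a-e}"
        unfolding C1_def
        by (intro has_integral_add integrable_integral intT has_integral_mult_right cot_int)
           (use ea nz1 in auto)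
      then show ?thesis by (subst has_integral_cong[OF GT[OF nz1]]) auto
    qed
    have h2: "(G has_integral (integral {a+e..1} T + en n t * of_real C2)) {a+e..1}"
    proof -
      have "((\<lambda>x. T x + en n t * of_real (cot (pi * (t - x)))) has_integral
             (integral {a+e..1} T + en n t * of_real C2)) {a+e..1}"
        unfolding C2_def
        by (intro has_integral_add integrable_integral intT has_integral_mult_right cot_int)
           (use ea nz2 in auto)
      then show ?thesis by (subst has_integral_cong[OF GT[OF nz2]]) auto
    qed
    have neg: "negligible ({0..a-e} \<inter> {a+e..1})"
    proof -
      have "{0..a-e} \<inter> {a+e..1} = {}" using e by auto
      then show ?thesis by simp
    qed
    have C12: "C1 + C2 = 0"
    proof -
      have p1: "Phi t (a - e) = Phi t (a + e)"
      proof -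
        have "(sin (pi * (t - (a - e))))\<^sup>2 = (sin (pi * e))\<^sup>2"
          using sin_sq_shift[of K "pi * e"] tK by (simp add: algebra_simps)
        moreover have "(sin (pi * (t - (a + e))))\<^sup>2 = (sin (pi * e))\<^sup>2"
          using sin_sq_shift[of K "- (pi * e)"] tK by (simp add: algebra_simps)
        ultimately show ?thesis unfolding Phi_def by simp
      qed
      have p2: "Phi t 1 = Phi t 0"
      proof -
        have "(sin (pi * (t - 1)))\<^sup>2 = (sin (pi * t))\<^sup>2"
          using sin_sq_shift[of "-1" "pi * t"] by (simp add: algebra_simps)
        then show ?thesis unfolding Phi_def by simp
      qed
      show ?thesis unfolding C1_def C2_def using p1 p2 by simp
    qed
    have "(G has_integral (integral {0..a-e} T + integral {a+e..1} T)) ({0..a-e} \<union> {a+e..1})"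
    proof -
      have c0: "(of_real C1 :: complex) + of_real C2 = 0" using C12 by (metis of_real_add of_real_0)
      have "integral {0..a-e} T + en n t * of_real C1 + (integral {a+e..1} T + en n t * of_real C2)
          = integral {0..a-e} T + integral {a+e..1} T + en n t * (of_real C1 + of_real C2)"
        by (simp add: algebra_simps)
      also have "\<dots> = integral {0..a-e} T + integral {a+e..1} T" unfolding c0 by simp
      finally have eqq: "integral {0..a-e} T + en n t * of_real C1 + (integral {a+e..1} T + en n t * of_real C2)
          = integral {0..a-e} T + integral {a+e..1} T" .
      show ?thesis using has_integral_Un[OF h1 h2 neg] unfolding eqq .
    qed
    then show ?thesis unfolding pv_cot_trunc_def Seq G_def[symmetric] by (rule integral_unique)
  qed

  have L1: "((\<lambda>e. integral {0..a-e} T) \<longlongrightarrow> integral {0..a} T) (at_right 0)"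
  proof (rule continuous_on_tendsto_compose[OF indefinite_integral_continuous_1[OF intT[of 0 1]]])
    show "((\<lambda>e. a - e) \<longlongrightarrow> a) (at_right 0)"
      using tendsto_diff[OF tendsto_const[of a] tendsto_ident_at[of 0 "{0<..}"]] by simp
    show "a \<in> {0..1}" using a0 a1 by simp
    show "\<forall>\<^sub>F e in at_right 0. a - e \<in> {0..1}"
      by (rule eventually_at_rightI[of 0 a]) (use a0 a1 in auto)
  qed
  have L2: "((\<lambda>e. integral {a+e..1} T) \<longlongrightarrow> integral {a..1} T) (at_right 0)"
  proof (rule continuous_on_tendsto_compose[OF indefinite_integral_continuous_1'[OF intT[of 0 1]]])
    show "((\<lambda>e. a + e) \<longlongrightarrow> a) (at_right 0)"
      using tendsto_add[OF tendsto_const[of a] tendsto_ident_at[of 0 "{0<..}"]] by simp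
    show "a \<in> {0..1}" using a0 a1 by simp
    show "\<forall>\<^sub>F e in at_right 0. a + e \<in> {0..1}"
      by (rule eventually_at_rightI[of 0 "1 - a"]) (use a0 a1 in auto)
  qed
  have comb: "integral {0..a} T + integral {a..1} T = I"
    using Henstock_Kurzweil_Integration.integral_combine[of 0 a 1 T] a0 a1 intT integral_unique[OF hT] by simp
  have lim: "(pv_cot_trunc t (en n) \<longlongrightarrow> I) (at_right 0)"
  proof (rule Lim_transform_eventually)
    show "((\<lambda>e. integral {0..a-e} T + integral {a+e..1} T) \<longlongrightarrow> I) (at_right 0)"
      using tendsto_add[OF L1 L2] comb by simp
    show "\<forall>\<^sub>F e in at_right 0. integral {0..a-e} T + integral {a+e..1} T = pv_cot_trunc t (en n) e"
      by (rule eventually_at_rightI[of 0 d]) (use d0 trunc in auto)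
  qed

  have disc: "(\<Sum>j=1..N. of_real (cot (pi * (t - real j / real N))) * en n (real j / real N))
      = (\<Sum>j=1..N. T (real j / real N)) + en n t * (of_nat N * of_real (cot (pi * t * real N)))"
  proof -
    have "(\<Sum>j=1..N. of_real (cot (pi * (t - real j / real N))) * en n (real j / real N))
        = (\<Sum>j=1..N. T (real j / real N) + en n t * of_real (cot (pi * (t - real j / real N))))"
      unfolding T_def by (rule sum.cong[OF refl], rule G_decomp[OF sin_nz[OF N tN]])
    also have "\<dots> = (\<Sum>j=1..N. T (real j / real N)) + en n t * (\<Sum>j=1..N. of_real (cot (pi * (t - real j / real N))))"
      by (simp add: sum.distrib sum_distrib_left)
    finally show ?thesis unfolding cot_sum[OF N tN] .
  qed
  have val: "(1 / real N) * (\<Sum>j=1..N. of_real (cot (pi * (t - real j / real N))) * en n (real j / real N))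
            - of_real (cot (pi * t * real N)) * en n t = I"
    unfolding disc I_def using N by (simp add: algebra_simps)
  show ?thesis unfolding has_pv_cot_integral_def val by (rule lim)
qed

end
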